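(* Let $\eta(n)\in\mathbb N^N$ denote random allocation after $n$ steps ($\eta_x(n)$ = number of the first $n$ i.i.d. uniform draws from $\{1,\dots,N\}$ equal to $x$). Let $T_N=\lfloor N/\log N\rfloor$ and $H_N=\log N/\log\log N$. For every $\alpha\in[\tfrac12,1)$ and every $\delta\in(0,(1-\alpha)/2)$, with probability at least $1-\varepsilon_N$ where $\sum_N\varepsilon_N<\infty$ (in the paper's words: almost surely, for $N$ large enough), $$\big|\{x\in\{1,\dots,N\}:\ \eta_x(T_N)>\delta H_N\}\big|\ge N^{\alpha}.$$ *)

theory Defs
  imports "HOL-Probability.Probability"
begin

text \<open>Random allocation: a sample path is a function \<omega> assigning to each step
  i < n the site \<omega> i in {1..N}; the i.i.d. uniform draws of the first n steps
  are modelled by the uniform distribution on all such functions.\<close>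

definition alloc_space :: "nat \<Rightarrow> nat \<Rightarrow> (nat \<Rightarrow> nat) set" where
  "alloc_space N n = PiE {..<n} (\<lambda>_. {1..N})"

definition alloc_pmf :: "nat \<Rightarrow> nat \<Rightarrow> (nat \<Rightarrow> nat) pmf" where
  "alloc_pmf N n = pmf_of_set (alloc_space N n)"

definition eta :: "(nat \<Rightarrow> nat) \<Rightarrow> nat \<Rightarrow> nat \<Rightarrow> nat" where
  "eta \<omega> n x = card {i. i < n \<and> \<omega> i = x}"

definition T_N :: "nat \<Rightarrow> nat" where
  "T_N N = nat \<lfloor>real N / ln (real N)\<rfloor>"

definition H_N :: "nat \<Rightarrow> real" where
  "H_N N = ln (real N) / ln (ln (real N))"

end

theory Submission
  imports Defs "HOL-Real_Asymp.Real_Asymp"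
begin

definition Phi :: "(nat \<Rightarrow> real) \<Rightarrow> 'i set \<Rightarrow> 'b set \<Rightarrow> real" where
  "Phi f I B = (\<Sum>\<omega>\<in>PiE I (\<lambda>_. B). \<Prod>x\<in>B. f (card {i\<in>I. \<omega> i = x}))"

lemma Phi_insert:
  assumes "finite I" "finite B" "x0 \<notin> B"
  shows "Phi f I (insert x0 B) = (\<Sum>S\<in>Pow I. f (card S) * Phi f (I - S) B)"
proof -
  let ?P = "PiE I (\<lambda>_. insert x0 B)"
  let ?h = "\<lambda>\<omega>. \<Prod>x\<in>insert x0 B. f (card {i\<in>I. \<omega> i = x})"
  let ?pre = "\<lambda>\<omega>. {i\<in>I. \<omega> i = x0}"
  have "Phi f I (insert x0 B) = (\<Sum>S\<in>Pow I. sum ?h {\<omega>. \<omega> \<in> ?P \<and> ?pre \<omega> = S})"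
    unfolding Phi_def
    by (rule sum.group[symmetric]) (use assms in \<open>auto intro: finite_PiE\<close>)
  also have "\<dots> = (\<Sum>S\<in>Pow I. f (card S) * Phi f (I - S) B)"
  proof (rule sum.cong[OF refl])
    fix S assume S: "S \<in> Pow I"
    define ext where "ext = (\<lambda>\<omega>'. \<lambda>i. if i \<in> S then x0 else \<omega>' i)"
    have inj: "inj_on ext (PiE (I - S) (\<lambda>_. B))"
    proof (rule inj_onI)
      fix u v assume u: "u \<in> PiE (I - S) (\<lambda>_. B)" and v: "v \<in> PiE (I - S) (\<lambda>_. B)"
        and e: "ext u = ext v"
      show "u = v"
      proof (rule PiE_ext[OF u v])
        fix i assume "i \<in> I - S"
        then show "u i = v i" using fun_cong[OF e, of i] by (simp add: ext_def)
      qed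
    qed
    have img: "ext ` PiE (I - S) (\<lambda>_. B) = {\<omega>. \<omega> \<in> ?P \<and> ?pre \<omega> = S}"
    proof
      show "ext ` PiE (I - S) (\<lambda>_. B) \<subseteq> {\<omega>. \<omega> \<in> ?P \<and> ?pre \<omega> = S}"
        using S assms(3) by (auto simp: ext_def PiE_def extensional_def Pi_def split: if_splits; metis)
    next
      show "{\<omega>. \<omega> \<in> ?P \<and> ?pre \<omega> = S} \<subseteq> ext ` PiE (I - S) (\<lambda>_. B)"
      proof
        fix \<omega> assume w: "\<omega> \<in> {\<omega>. \<omega> \<in> ?P \<and> ?pre \<omega> = S}"
        define \<omega>' where "\<omega>' = restrict \<omega> (I - S)"
        have "\<omega>' \<in> PiE (I - S) (\<lambda>_. B)"
          using w by (auto simp: \<omega>'_def PiE_def Pi_def)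
        moreover have "ext \<omega>' = \<omega>"
        proof
          fix i show "ext \<omega>' i = \<omega> i"
            using w S by (auto simp: ext_def \<omega>'_def PiE_def extensional_def)
        qed
        ultimately show "\<omega> \<in> ext ` PiE (I - S) (\<lambda>_. B)" by blast
      qed
    qed
    have "sum ?h {\<omega>. \<omega> \<in> ?P \<and> ?pre \<omega> = S} = sum (?h \<circ> ext) (PiE (I - S) (\<lambda>_. B))"
      by (subst img[symmetric], rule sum.reindex[OF inj])
    also have "\<dots> = (\<Sum>\<omega>'\<in>PiE (I - S) (\<lambda>_. B). f (card S) * (\<Prod>x\<in>B. f (card {i\<in>I - S. \<omega>' i = x})))"
    proof (rule sum.cong[OF refl])
      fix \<omega>' assume w: "\<omega>' \<in> PiE (I - S) (\<lambda>_. B)"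
      have 1: "{i\<in>I. ext \<omega>' i = x0} = S"
        using w S assms(3) by (auto simp: ext_def PiE_def Pi_def)
      have 2: "{i\<in>I. ext \<omega>' i = x} = {i\<in>I - S. \<omega>' i = x}" if "x \<in> B" for x
        using that S assms(3) by (auto simp: ext_def)
      show "(?h \<circ> ext) \<omega>' = f (card S) * (\<Prod>x\<in>B. f (card {i\<in>I - S. \<omega>' i = x}))"
        using assms(2,3) by (simp add: 1 2 cong: prod.cong)
    qed
    also have "\<dots> = f (card S) * Phi f (I - S) B"
      by (simp add: Phi_def sum_distrib_left)
    finally show "sum ?h {\<omega>. \<omega> \<in> ?P \<and> ?pre \<omega> = S} = f (card S) * Phi f (I - S) B" .
  qed
  finally show ?thesis .
qed


lemma sum_Pow_card:
  assumes "finite I"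
  shows "(\<Sum>S\<in>Pow I. g (card S)) = (\<Sum>j\<le>card I. of_nat (card I choose j) * (g j :: real))"
proof -
  have "(\<Sum>S\<in>Pow I. g (card S)) = (\<Sum>j\<le>card I. \<Sum>S | S \<in> Pow I \<and> card S = j. g (card S))"
    by (rule sum.group[symmetric]) (use assms in \<open>auto intro: card_mono\<close>)
  also have "\<dots> = (\<Sum>j\<le>card I. of_nat (card I choose j) * g j)"
  proof (rule sum.cong[OF refl])
    fix j
    have "(\<Sum>S | S \<in> Pow I \<and> card S = j. g (card S)) = (\<Sum>S | S \<subseteq> I \<and> card S = j. g j)"
      by (rule sum.cong) auto
    also have "\<dots> = of_nat (card I choose j) * g j"
      using n_subsets[OF assms, of j] by simp
    finally show "(\<Sum>S | S \<in> Pow I \<and> card S = j. g (card S)) = of_nat (card I choose j) * g j" .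
  qed
  finally show ?thesis .
qed

lemma Phi_bound:
  assumes "finite B" "r > 0" "\<And>j. 0 \<le> f j"
  shows "finite I \<Longrightarrow> card I \<le> M \<Longrightarrow>
    Phi f I B \<le> fact (card I) / r ^ card I * (\<Sum>j\<le>M. f j * r^j / fact j) ^ card B"
  using assms(1)
proof (induction B arbitrary: I rule: finite_induct)
  case empty
  define G where "G = (\<Sum>j\<le>M. f j * r^j / fact j)"
  show ?case
  proof (cases "I = {}")
    case True
    then show ?thesis by (simp add: Phi_def)
  next
    case False
    then have "card I > 0" using empty.prems by (simp add: card_gt_0_iff)
    then show ?thesis using assms(2) empty.prems by (simp add: Phi_def card_PiE prod_zero power_0_left)
  qed
next
  case (insert x B)
  define G where "G = (\<Sum>j\<le>M. f j * r^j / fact j)"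
  have G0: "0 \<le> G" unfolding G_def using assms(2,3) by (intro sum_nonneg) auto
  let ?n = "card I"
  have "Phi f I (insert x B) = (\<Sum>S\<in>Pow I. f (card S) * Phi f (I - S) B)"
    by (rule Phi_insert) (use insert in auto)
  also have "\<dots> \<le> (\<Sum>S\<in>Pow I. f (card S) * (fact (?n - card S) / r ^ (?n - card S) * G ^ card B))"
  proof (rule sum_mono)
    fix S assume S: "S \<in> Pow I"
    have fin: "finite S" using S insert.prems(1) finite_subset by auto
    have c: "card (I - S) = ?n - card S" using S fin by (simp add: card_Diff_subset)
    have "Phi f (I - S) B \<le> fact (card (I - S)) / r ^ card (I - S) * G ^ card B"
      unfolding G_def using insert.prems by (intro insert.IH) (auto intro: card_mono order_trans[OF card_mono])
    then show "f (card S) * Phi f (I - S) B \<le> f (card S) * (fact (?n - card S) / r ^ (?n - card S) * G ^ card B)"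
      using assms(3)[of "card S"] unfolding c by (intro mult_left_mono) (simp_all add: field_simps)
  qed
  also have "\<dots> = (\<Sum>j\<le>?n. of_nat (?n choose j) * (f j * (fact (?n - j) / r ^ (?n - j) * G ^ card B)))"
    by (rule sum_Pow_card[OF insert.prems(1)])
  also have "\<dots> = (\<Sum>j\<le>?n. fact ?n / r ^ ?n * (f j * r^j / fact j)) * G ^ card B"
    unfolding sum_distrib_right
  proof (rule sum.cong[OF refl])
    fix j assume j: "j \<in> {..?n}"
    then have jn: "j \<le> ?n" by simp
    have "r ^ ?n = r ^ j * r ^ (?n - j)" using jn by (simp add: power_add[symmetric])
    then show "of_nat (?n choose j) * (f j * (fact (?n - j) / r ^ (?n - j) * G ^ card B)) =
      fact ?n / r ^ ?n * (f j * r ^ j / fact j) * G ^ card B"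
      using jn assms(2) by (simp add: binomial_fact field_simps)
  qed
  also have "\<dots> = fact ?n / r ^ ?n * (\<Sum>j\<le>?n. f j * r^j / fact j) * G ^ card B"
    by (simp add: sum_distrib_left)
  also have "\<dots> \<le> fact ?n / r ^ ?n * G * G ^ card B"
  proof -
    have "(\<Sum>j\<le>?n. f j * r^j / fact j) \<le> G"
      unfolding G_def using insert.prems(2) assms(2,3) by (intro sum_mono2) auto
    then show ?thesis using G0 assms(2)
      by (intro mult_right_mono mult_left_mono) auto
  qed
  also have "\<dots> = fact ?n / r ^ ?n * G ^ card (insert x B)"
    using insert by simp
  finally show ?case unfolding G_def .
qed

lemma fact_exp_bound: "n \<ge> 1 \<Longrightarrow> fact n * exp (real n) \<le> exp 1 * real n * real n ^ n"
proof (induction n rule: dec_induct)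
  case base then show ?case by simp
next
  case (step n)
  have n0: "real n > 0" using step by simp
  have "ln (real n / (real n + 1)) \<le> real n / (real n + 1) - 1"
    by (rule ln_le_minus_one) (use n0 in simp)
  also have "\<dots> = - 1 / (real n + 1)" using n0 by (simp add: field_simps)
  finally have l: "ln (real n / (real n + 1)) \<le> - 1 / (real n + 1)" .
  have "ln ((real n + 1) / real n) = - ln (real n / (real n + 1))"
    using n0 by (simp add: ln_div)
  with l have "1 \<le> (real n + 1) * ln ((real n + 1) / real n)"
    using n0 by (simp add: field_simps)
  then have "exp 1 \<le> exp ((real n + 1) * ln ((real n + 1) / real n))" by simp
  also have "\<dots> = ((real n + 1) / real n) ^ Suc n"
  proof -
    have "(real n + 1) * ln ((real n + 1) / real n) = real (Suc n) * ln ((real n + 1) / real n)" by simp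
    also have "exp \<dots> = exp (ln ((real n + 1) / real n)) ^ Suc n" by (rule exp_of_nat_mult)
    also have "\<dots> = ((real n + 1) / real n) ^ Suc n" using n0 by simp
    finally show ?thesis by simp
  qed
  finally have e: "exp 1 * real n ^ Suc n \<le> (real n + 1) ^ Suc n"
    using n0 by (simp add: field_simps power_divide)
  have "fact (Suc n) * exp (real (Suc n)) = (real n + 1) * exp 1 * (fact n * exp (real n))"
    by (simp add: exp_add field_simps)
  also have "\<dots> \<le> (real n + 1) * exp 1 * (exp 1 * real n * real n ^ n)"
    using step.IH by (intro mult_left_mono) auto
  also have "\<dots> = exp 1 * (real n + 1) * (exp 1 * real n ^ Suc n)" by (simp add: field_simps)
  also have "\<dots> \<le> exp 1 * (real n + 1) * (real n + 1) ^ Suc n"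
    using e by (intro mult_left_mono) auto
  finally have "fact (Suc n) * exp (real (Suc n)) \<le> exp 1 * (real n + 1) * (real n + 1) ^ Suc n" .
  then show ?case by (simp only: of_nat_Suc add.commute)
qed

lemma exp_partial: "0 \<le> (r::real) \<Longrightarrow> (\<Sum>j\<le>n. r^j / fact j) \<le> exp r"
  using summable_exp_generic[of r]
  by (auto simp: exp_def divide_inverse ac_simps intro!: sum_le_suminf)

lemma asymp_facts:
  fixes a d :: real
  assumes "0 < d" "0 < a" "a + 2*d < 1"
  shows "\<exists>X0. \<forall>x\<ge>X0. 1 \<le> ln (ln x) \<and> 1 \<le> ln x \<and> 1 \<le> x \<and>
     d * ln x / ln (ln x) + 1 \<le> x / ln x - 1 \<and>
     1 / (2 * ln x) \<le> 1 / ln x - 1 / x \<and>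
     x powr a * ln 2 + 1 + 3 * ln x \<le> x/(2*exp 1) * (2*(d*ln x/ln(ln x)+1)*ln x) powr (-(d*ln x/ln(ln x)+1))"
proof -
  have "eventually (\<lambda>x::real. 1 \<le> ln (ln x)) at_top" by real_asymp
  moreover have "eventually (\<lambda>x::real. 1 \<le> ln x) at_top" by real_asymp
  moreover have "eventually (\<lambda>x::real. 1 \<le> x) at_top" by real_asymp
  moreover have "eventually (\<lambda>x::real. d * ln x / ln (ln x) + 1 \<le> x / ln x - 1) at_top"
    using assms by real_asymp
  moreover have "eventually (\<lambda>x::real. 1 / (2 * ln x) \<le> 1 / ln x - 1 / x) at_top" by real_asymp
  moreover have "eventually (\<lambda>x. x powr a * ln 2 + 1 + 3 * ln x \<le> x/(2*exp 1) * (2*(d*ln x/ln(ln x)+1)*ln x) powr (-(d*ln x/ln(ln x)+1))) at_top"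
    using assms by real_asymp
  ultimately have "eventually (\<lambda>x. 1 \<le> ln (ln x) \<and> 1 \<le> ln x \<and> 1 \<le> x \<and>
     d * ln x / ln (ln x) + 1 \<le> x / ln x - 1 \<and>
     1 / (2 * ln x) \<le> 1 / ln x - 1 / x \<and>
     x powr a * ln 2 + 1 + 3 * ln x \<le> x/(2*exp 1) * (2*(d*ln x/ln(ln x)+1)*ln x) powr (-(d*ln x/ln(ln x)+1))) at_top"
    by eventually_elim blast
  then show ?thesis by (simp add: eventually_at_top_linorder)
qed


lemma aux_rearr: "(b::real) \<noteq> 0 \<Longrightarrow> c \<noteq> 0 \<Longrightarrow> A * (F / b * (X * E)) / c = A * (F * X / (b * c)) * E"
  by (simp add: field_simps)

lemma main_bound:
  fixes \<alpha> \<delta> :: real and N :: nat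
  assumes \<delta>0: "0 < \<delta>"
  and h1: "1 \<le> ln (ln (real N))" and h2: "1 \<le> ln (real N)" and h3: "1 \<le> real N"
  and h4: "\<delta> * ln (real N) / ln (ln (real N)) + 1 \<le> real N / ln (real N) - 1"
  and h5: "1 / (2 * ln (real N)) \<le> 1 / ln (real N) - 1 / real N"
  and h6: "real N powr \<alpha> * ln 2 + 1 + 3 * ln (real N) \<le> real N/(2*exp 1) *
     (2*(\<delta>*ln (real N)/ln(ln (real N))+1)*ln (real N)) powr (-(\<delta>*ln (real N)/ln(ln (real N))+1))"
  shows "measure_pmf.prob (alloc_pmf N (T_N N))
        {\<omega>. real (card {x \<in> {1..N}. real (eta \<omega> (T_N N) x) > \<delta> * H_N N}) \<ge> real N powr \<alpha>}
      \<ge> 1 - 1 / real N ^ 2"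
proof -
  define xr where "xr = real N"
  define T where "T = T_N N"
  define H where "H = H_N N"
  define k where "k = nat \<lfloor>\<delta> * H\<rfloor> + 1"
  define K where "K = \<delta> * H + 1"
  define r where "r = real T / xr"
  define L where "L = xr/(2*exp 1) * (2*K*ln xr) powr (-K)"
  have lx: "1 \<le> ln xr" "1 \<le> ln (ln xr)" "1 \<le> xr" using h1 h2 h3 by (simp_all add: xr_def)
  have H_def': "H = ln xr / ln (ln xr)" by (simp add: H_def H_N_def xr_def)
  have Hpos: "H > 0" using lx unfolding H_def' by (intro divide_pos_pos; linarith)
  have KL: "K \<le> xr / ln xr - 1" using h4 by (simp add: K_def H_def' xr_def)
  have T_real: "xr / ln xr - 1 \<le> real T" "real T \<le> xr / ln xr"
  proof -
    have "0 \<le> xr / ln xr" using lx by simp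
    then have "real T = of_int \<lfloor>xr / ln xr\<rfloor>"
      by (simp add: T_def T_N_def xr_def)
    then show "xr / ln xr - 1 \<le> real T" "real T \<le> xr / ln xr" by linarith+
  qed
  have k_real: "real k \<le> K" "\<delta> * H < real k" "1 \<le> k"
  proof -
    have "0 \<le> \<delta> * H" using \<delta>0 Hpos by simp
    then have "real k = of_int \<lfloor>\<delta> * H\<rfloor> + 1" by (simp add: k_def)
    then show "real k \<le> K" "\<delta> * H < real k" by (simp_all add: K_def)
    show "1 \<le> k" by (simp add: k_def)
  qed
  have kT: "k \<le> T" using k_real(1) KL T_real(1) by linarith
  have T1: "1 \<le> T" using kT k_real(3) by simp
  have r0: "0 < r" using T1 lx by (simp add: r_def)
  have r_lo: "1 / (2 * ln xr) \<le> r"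
  proof -
    have "real T / xr \<ge> (xr / ln xr - 1) / xr" using T_real(1) lx by (intro divide_right_mono) auto
    moreover have "(xr / ln xr - 1) / xr = 1 / ln xr - 1 / xr" using lx by (simp add: field_simps)
    ultimately show ?thesis using h5 by (simp add: r_def xr_def)
  qed
  have r_hi: "r \<le> 1"
  proof -
    have "r \<le> (xr / ln xr) / xr" unfolding r_def using T_real(2) lx by (intro divide_right_mono) auto
    also have "\<dots> = 1 / ln xr" using lx by simp
    also have "\<dots> \<le> 1" using lx by (auto simp: divide_le_eq_1)
    finally show ?thesis .
  qed
  define f where "f = (\<lambda>j::nat. if \<delta> * H < real j then 1/2 else (1::real))"
  define Y where "Y = (\<lambda>\<omega>. {x \<in> {1..N}. real (eta \<omega> T x) > \<delta> * H})"
  define good where "good = {\<omega>. real (card (Y \<omega>)) \<ge> xr powr \<alpha>}"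
  define S where "S = alloc_space N T"
  have finS: "finite S" by (simp add: S_def alloc_space_def finite_PiE)
  have cardS: "card S = N ^ T" by (simp add: S_def alloc_space_def card_PiE)
  have Sne: "S \<noteq> {}" using cardS lx by (auto simp: xr_def)
  have Nge: "N \<ge> 1" using lx by (simp add: xr_def)
  have prodY: "(\<Prod>y\<in>{1..N}. f (card {i\<in>{..<T}. \<omega> i = y})) = (1/2) ^ card (Y \<omega>)" for \<omega>
  proof -
    have e: "card {i\<in>{..<T}. \<omega> i = y} = eta \<omega> T y" for y
      by (simp add: eta_def)
    have "(\<Prod>y\<in>{1..N}. f (card {i\<in>{..<T}. \<omega> i = y})) =
          (\<Prod>y\<in>{1..N}. if \<delta> * H < real (eta \<omega> T y) then 1/2 else 1)"
      by (simp add: f_def eta_def)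
    also have "\<dots> = (\<Prod>y\<in>{1..N} \<inter> {y. \<delta> * H < real (eta \<omega> T y)}. 1/2) *
                    (\<Prod>y\<in>{1..N} \<inter> - {y. \<delta> * H < real (eta \<omega> T y)}. 1)"
      by (rule prod.If_cases) simp
    also have "\<dots> = (1/2) ^ card (Y \<omega>)"
      by (simp add: Y_def Int_def)
    finally show ?thesis .
  qed
  have bad_le: "1 \<le> 2 powr (xr powr \<alpha>) * (1/2) ^ card (Y \<omega>)" if "\<omega> \<notin> good" for \<omega>
  proof -
    have c: "real (card (Y \<omega>)) < xr powr \<alpha>" using that by (simp add: good_def)
    have "(1/2::real) ^ card (Y \<omega>) = 2 powr (- real (card (Y \<omega>)))"
      by (simp add: powr_minus powr_realpow power_one_over inverse_eq_divide)
    then have "2 powr (xr powr \<alpha>) * (1/2) ^ card (Y \<omega>) = 2 powr (xr powr \<alpha> - real (card (Y \<omega>)))"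
      by (simp add: powr_add[symmetric])
    also have "\<dots> \<ge> 1" using c by (intro ge_one_powr_ge_zero) auto
    finally show ?thesis .
  qed
  define G where "G = (\<Sum>j\<le>T. f j * r^j / fact j)"
  have f0: "\<And>j. 0 \<le> f j" by (simp add: f_def)
  have G0: "0 \<le> G" unfolding G_def using f0 r0 by (intro sum_nonneg) auto
  have Phi_le: "Phi f {..<T} {1..N} \<le> fact T / r ^ T * G ^ N"
    using Phi_bound[of "{1..N}" r f "{..<T}" T] r0 f0 by (simp add: G_def)
  have card_bad: "real (card (S - good)) \<le> 2 powr (xr powr \<alpha>) * Phi f {..<T} {1..N}"
  proof -
    have "real (card (S - good)) = (\<Sum>\<omega>\<in>S - good. 1)" by simp
    also have "\<dots> \<le> (\<Sum>\<omega>\<in>S - good. 2 powr (xr powr \<alpha>) * (1/2) ^ card (Y \<omega>))"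
      by (intro sum_mono bad_le) auto
    also have "\<dots> \<le> (\<Sum>\<omega>\<in>S. 2 powr (xr powr \<alpha>) * (1/2) ^ card (Y \<omega>))"
      using finS by (intro sum_mono2) auto
    also have "\<dots> = 2 powr (xr powr \<alpha>) * Phi f {..<T} {1..N}"
      by (simp only: Phi_def prodY S_def alloc_space_def sum_distrib_left)
    finally show ?thesis .
  qed
  define q where "q = r ^ k / (2 * fact k)"
  have G_le: "G \<le> exp r - q"
  proof -
    have "G + q = (\<Sum>j\<in>{..T} - {k}. f j * r^j / fact j) + (f k * r^k / fact k + q)"
      unfolding G_def using kT by (subst sum.remove[of _ k]) auto
    also have "f k * r^k / fact k + q = r^k / fact k"
      using k_real(2) by (simp add: f_def q_def field_simps)
    also have "(\<Sum>j\<in>{..T} - {k}. f j * r^j / fact j) \<le> (\<Sum>j\<in>{..T} - {k}. r^j / fact j)"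
      using r0 by (intro sum_mono) (auto simp: f_def divide_right_mono)
    also have "(\<Sum>j\<in>{..T} - {k}. r^j / fact j) + r^k / fact k = (\<Sum>j\<le>T. r^j / fact j)"
      using kT by (subst (2) sum.remove[of _ k]) auto
    also have "\<dots> \<le> exp r" using r0 by (intro exp_partial) simp
    finally show ?thesis by simp
  qed
  have G_le2: "G \<le> exp r * exp (- q / exp r)"
  proof -
    have "exp r - q = exp r * (1 + (- q / exp r))" by (simp add: field_simps)
    also have "\<dots> \<le> exp r * exp (- q / exp r)"
      by (intro mult_left_mono exp_ge_add_one_self) auto
    finally show ?thesis using G_le by simp
  qed
  have GN: "G ^ N \<le> exp (real T) * exp (- xr * q / exp r)"
  proof -
    have "G ^ N \<le> (exp r * exp (- q / exp r)) ^ N" using G0 G_le2 by (intro power_mono) auto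
    also have "exp r * exp (- q / exp r) = exp (r + (- q / exp r))" by (rule exp_add[symmetric])
    also have "exp (r + (- q / exp r)) ^ N = exp (real N * (r + (- q / exp r)))" by (rule exp_of_nat_mult[symmetric])
    also have "real N * (r + (- q / exp r)) = real T + (- xr * q / exp r)"
      using lx by (simp add: r_def xr_def field_simps)
    also have "exp (real T + (- xr * q / exp r)) = exp (real T) * exp (- xr * q / exp r)" by (rule exp_add)
    finally show ?thesis .
  qed
  have q_lo: "(2*K*ln xr) powr (-K) / 2 \<le> q"
  proof -
    have K1: "1 \<le> K" using \<delta>0 Hpos by (simp add: K_def)
    have base1: "1 \<le> 2*K*ln xr" using K1 lx by (simp add: one_le_mult_iff mult_ge1_I) 
    have "fact k \<le> real k ^ k" using fact_le_power[of k] by simp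
    also have "\<dots> \<le> K ^ k" using k_real(1) by (intro power_mono) auto
    finally have fk: "fact k \<le> K ^ k" .
    have rk: "(1 / (2 * ln xr)) ^ k \<le> r ^ k" using r_lo lx by (intro power_mono) auto
    have "(2*K*ln xr) powr (-K) \<le> (2*K*ln xr) powr (- real k)"
      using base1 k_real(1) by (intro powr_mono) auto
    also have "\<dots> = 1 / (2*K*ln xr) ^ k"
      using base1 by (simp add: powr_minus powr_realpow divide_inverse)
    also have "\<dots> = (1 / (2 * ln xr)) ^ k / K ^ k"
      by (simp add: power_mult_distrib power_divide field_simps)
    also have "\<dots> \<le> r ^ k / fact k"
      using rk fk K1 r0 by (intro frac_le) auto
    finally show ?thesis by (simp add: q_def)
  qed
  have L_le: "L \<le> xr * q / exp r"
  proof -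
    have "exp r \<le> exp 1" using r_hi by simp
    have "L = xr * ((2*K*ln xr) powr (-K) / 2) / exp 1" by (simp add: L_def)
    also have "\<dots> \<le> xr * q / exp 1" using q_lo lx by (intro divide_right_mono mult_left_mono) auto
    also have "\<dots> \<le> xr * q / exp r"
      using \<open>exp r \<le> exp 1\<close> lx q_lo by (intro divide_left_mono mult_nonneg_nonneg) (auto intro: order_trans[OF _ q_lo])
    finally show ?thesis .
  qed
  have hL: "xr powr \<alpha> * ln 2 + 1 + 3 * ln xr \<le> L"
    using h6 by (simp add: L_def K_def H_def' xr_def)
  have "measure_pmf.prob (alloc_pmf N T) (UNIV - good) = real (card (S - good)) / real (card S)"
    using finS Sne by (simp add: alloc_pmf_def S_def measure_pmf_of_set Diff_eq Int_commute)
  also have "\<dots> \<le> 2 powr (xr powr \<alpha>) * (fact T / r ^ T * (exp (real T) * exp (- xr * q / exp r))) / real N ^ T"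
  proof -
    have "real (card (S - good)) \<le> 2 powr (xr powr \<alpha>) * (fact T / r ^ T * G ^ N)"
      using card_bad Phi_le by (smt (verit) mult_left_mono powr_ge_zero)
    also have "\<dots> \<le> 2 powr (xr powr \<alpha>) * (fact T / r ^ T * (exp (real T) * exp (- xr * q / exp r)))"
      using GN r0 by (intro mult_left_mono) auto
    finally show ?thesis unfolding cardS of_nat_power using Nge by (intro divide_right_mono) auto
  qed
  also have "\<dots> = 2 powr (xr powr \<alpha>) * (fact T * exp (real T) / (r ^ T * real N ^ T)) * exp (- xr * q / exp r)"
    by (rule aux_rearr) (use r0 Nge in auto)
  also have "r ^ T * real N ^ T = real T ^ T"
    using lx by (simp add: r_def xr_def power_mult_distrib[symmetric])
  also have "2 powr (xr powr \<alpha>) * (fact T * exp (real T) / real T ^ T) * exp (- xr * q / exp r)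
      \<le> 2 powr (xr powr \<alpha>) * (exp 1 * real T) * exp (- L)"
  proof -
    have "fact T * exp (real T) \<le> exp 1 * real T * real T ^ T" using fact_exp_bound T1 by simp
    then have P: "fact T * exp (real T) / real T ^ T \<le> exp 1 * real T"
      using T1 by (simp add: divide_le_eq)
    have E: "exp (- xr * q / exp r) \<le> exp (- L)" using L_le by simp
    have n1: "0 \<le> fact T * exp (real T) / real T ^ T" by simp
    have n2: "0 \<le> exp (- xr * q / exp r)" by simp
    have n3: "0 \<le> exp 1 * real T" by simp
    have n4: "0 \<le> 2 powr (xr powr \<alpha>)" by simp
    show ?thesis using mult_left_mono[OF mult_mono[OF P E n3 n2] n4]
      by (simp only: mult.assoc)
  qed
  also have "\<dots> \<le> 2 powr (xr powr \<alpha>) * (exp 1 * xr) * exp (- L)"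
  proof -
    have lnpos: "0 < ln xr" using lx by linarith
    have "xr / ln xr \<le> xr / 1" using lx lnpos by (intro divide_left_mono) simp_all
    then have "real T \<le> xr" using T_real(2) by simp
    then show ?thesis by (intro mult_right_mono mult_left_mono) auto
  qed
  also have "\<dots> = exp (xr powr \<alpha> * ln 2 + (1 + ln xr) + - L)"
  proof -
    have 1: "2 powr (xr powr \<alpha>) = exp (xr powr \<alpha> * ln 2)" by (simp add: powr_def)
    have 2: "exp 1 * xr = exp (1 + ln xr)" using lx by (simp add: exp_add)
    show ?thesis unfolding 1 2 by (simp only: exp_add)
  qed
  also have "\<dots> \<le> exp (- (ln xr + ln xr))" using hL by simp
  also have "\<dots> = 1 / real N ^ 2"
  proof -
    have "exp (- (ln xr + ln xr)) = 1 / (exp (ln xr) * exp (ln xr))"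
      by (simp only: exp_minus exp_add inverse_eq_divide)
    also have "\<dots> = 1 / real N ^ 2" using lx by (simp add: xr_def power2_eq_square)
    finally show ?thesis .
  qed
  finally have bad: "measure_pmf.prob (alloc_pmf N T) (UNIV - good) \<le> 1 / real N ^ 2" .
  have "measure_pmf.prob (alloc_pmf N T) good = 1 - measure_pmf.prob (alloc_pmf N T) (UNIV - good)"
    using measure_pmf.prob_compl[of "UNIV - good" "alloc_pmf N T"] by (simp add: Diff_Diff_Int)
  with bad have "measure_pmf.prob (alloc_pmf N T) good \<ge> 1 - 1 / real N ^ 2" by simp
  then show ?thesis by (simp add: good_def Y_def T_def H_def xr_def)
qed

theorem lemma5p2:
  fixes \<alpha> \<delta> :: real
  assumes "1/2 \<le> \<alpha>" "\<alpha> < 1" "0 < \<delta>" "\<delta> < (1 - \<alpha>) / 2"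
  shows "\<exists>\<epsilon> :: nat \<Rightarrow> real. (\<forall>N. 0 \<le> \<epsilon> N) \<and> summable \<epsilon> \<and>
    (\<forall>N. measure_pmf.prob (alloc_pmf N (T_N N))
        {\<omega>. real (card {x \<in> {1..N}. real (eta \<omega> (T_N N) x) > \<delta> * H_N N}) \<ge> real N powr \<alpha>}
      \<ge> 1 - \<epsilon> N)"
proof -
  obtain X0 where X0: "\<And>x. x \<ge> X0 \<Longrightarrow> 1 \<le> ln (ln x) \<and> 1 \<le> ln x \<and> 1 \<le> x \<and>
     \<delta> * ln x / ln (ln x) + 1 \<le> x / ln x - 1 \<and>
     1 / (2 * ln x) \<le> 1 / ln x - 1 / x \<and>
     x powr \<alpha> * ln 2 + 1 + 3 * ln x \<le> x/(2*exp 1) * (2*(\<delta>*ln x/ln(ln x)+1)*ln x) powr (-(\<delta>*ln x/ln(ln x)+1))"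
    using asymp_facts[of \<delta> \<alpha>] assms by auto
  define \<epsilon> where "\<epsilon> = (\<lambda>N::nat. if X0 \<le> real N then 1 / real N ^ 2 else 1)"
  have "\<forall>N. 0 \<le> \<epsilon> N" by (simp add: \<epsilon>_def)
  moreover have "summable \<epsilon>"
  proof (rule summable_comparison_test')
    show "summable (\<lambda>n. inverse (real n ^ 2))" by (rule inverse_power_summable) simp
    show "norm (\<epsilon> n) \<le> inverse (real n ^ 2)" if "n \<ge> nat \<lceil>X0\<rceil>" for n
    proof -
      have "X0 \<le> real n" using that by linarith
      then show ?thesis by (simp add: \<epsilon>_def inverse_eq_divide)
    qed
  qed
  moreover have "\<forall>N. measure_pmf.prob (alloc_pmf N (T_N N))
        {\<omega>. real (card {x \<in> {1..N}. real (eta \<omega> (T_N N) x) > \<delta> * H_N N}) \<ge> real N powr \<alpha>}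
      \<ge> 1 - \<epsilon> N"
  proof
    fix N :: nat
    show "measure_pmf.prob (alloc_pmf N (T_N N))
        {\<omega>. real (card {x \<in> {1..N}. real (eta \<omega> (T_N N) x) > \<delta> * H_N N}) \<ge> real N powr \<alpha>}
      \<ge> 1 - \<epsilon> N"
    proof (cases "X0 \<le> real N")
      case True
      note h = X0[OF True]
      show ?thesis unfolding \<epsilon>_def using True
        by (simp only: if_True) (rule main_bound; use h assms in auto)
    next
      case False
      then show ?thesis by (simp add: \<epsilon>_def)
    qed
  qed
  ultimately show ?thesis by blast
qed

end
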